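(* Let $0<r<s<\infty$, $\alpha>0$, $\beta>0$, and for $n\ge3$ let $h_*=h_*(n)>0$ be defined by $\frac{2\alpha}{h_*^r}+\frac{2\beta}{h_*^s}=\log n-(\log\log n)^2$. Let $h_n>0$ with $h_n\to0$ satisfy $$b\log h_n+\frac{2\alpha}{h_n^r}+\frac{2\beta}{h_n^s}=\log n+C(1+o(1)),\quad n\to\infty,$$ for some $b\in\mathbb{R}$, $C\in\mathbb{R}$. Then, as $n\to\infty$: $h_*(n)=(\log n/(2\beta))^{-1/s}(1+o(1))$; for every $a\in\mathbb{R}$, $$h_n^a\exp\Big(-\frac{2\alpha}{h_n^r}\Big)=h_*^a\exp\Big(-\frac{2\alpha}{h_*^r}\Big)(1+o(1))\quad\text{and}\quad\frac{h_*^a}{n}\exp\Big(\frac{2\beta}{h_*^s}\Big)=o\Big(\exp\Big(-\frac{2\alpha}{h_*^r}\Big)\Big);$$ and for every $\gamma\in\mathbb{R}$, for $n$ large enough, $$h_*^{s+2\gamma-1}\exp\Big(\frac{2\beta}{h_*^s}\Big)\le h_n^{s+2\gamma-1}\exp\Big(\frac{2\beta}{h_n^s}\Big).$$ *)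

theory Defs
  imports Complex_Main "HOL-Library.Landau_Symbols"
begin

end

theory Submission imports Defs "HOL-Real_Asymp.Real_Asymp" "HOL-Analysis.Convex" "HOL-Analysis.Elementary_Normed_Spaces" begin

lemma bern_powr:
  fixes t q :: real assumes "t > 0" "0 \<le> q" "q \<le> 1"
  shows "t powr q \<le> 1 + q * (t - 1)"
  using Youngs_inequality_0[of q "1-q" t 1] assms by (simp add: algebra_simps)

lemma powr_diff_bound:
  fixes x y q :: real assumes "0 < y" "y \<le> x" "0 \<le> q" "q \<le> 1"
  shows "x powr q - y powr q \<le> q * y powr (q - 1) * (x - y)"
proof -
  have "(x/y) powr q \<le> 1 + q * (x/y - 1)" using bern_powr[of "x/y" q] assms by simp
  hence "y powr q * (x/y) powr q \<le> y powr q * (1 + q * (x/y - 1))"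
    by (simp add: mult_left_mono)
  moreover have "y powr q * (x/y) powr q = x powr q" using assms
    by (simp add: powr_divide)
  moreover have "y powr q * (1 + q * (x/y - 1)) = y powr q + q * (y powr q / y) * (x - y)"
    using assms by (simp add: field_simps)
  moreover have "y powr q / y = y powr (q - 1)" using assms by (simp add: powr_diff)
  ultimately show ?thesis by simp
qed

lemma powr_abs_diff_bound:
  fixes x y q :: real assumes "0 < y" "0 < x" "0 \<le> q" "q \<le> 1"
  shows "\<bar>x powr q - y powr q\<bar> \<le> q * min x y powr (q - 1) * \<bar>x - y\<bar>"
proof (cases "y \<le> x")
  case True
  then show ?thesis using powr_diff_bound[of y x q] assms powr_mono2[of q y x]
    by (simp add: min_def)
next
  case False
  then show ?thesis using powr_diff_bound[of x y q] assms powr_mono2[of q x y]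
    by (simp add: min_def)
qed

lemma powr_rel:
  fixes x r s :: real assumes "x > 0" "s > 0"
  shows "1 / x powr r = (x powr (-s)) powr (r/s)"
    "1 / x powr s = x powr (-s)"
    "ln x = -(1/s) * ln (x powr (-s))"
    "x = (x powr (-s)) powr (-1/s)"
proof -
  show "1 / x powr r = (x powr (-s)) powr (r/s)" using assms
    by (simp add: powr_powr powr_minus_divide[symmetric])
  show "1 / x powr s = x powr (-s)" by (simp add: powr_minus_divide)
  show "ln x = -(1/s) * ln (x powr (-s))" using assms by (simp add: ln_powr)
  show "x = (x powr (-s)) powr (-1/s)" using assms by (simp add: powr_powr)
qed

lemma helper2:
  fixes x r s a \<alpha> :: real assumes "x > 0" "s > 0"
  shows "x powr a * exp (- 2 * \<alpha> / x powr r) =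
    (x powr (-s)) powr (-a/s) * exp (-(2*\<alpha>) * (x powr (-s)) powr (r/s))"
proof -
  have "x powr a = (x powr (-s)) powr (-a/s)" using assms by (simp add: powr_powr)
  moreover have "- 2 * \<alpha> / x powr r = -(2*\<alpha>) * (1 / x powr r)" by simp
  ultimately show ?thesis using powr_rel(1)[OF assms, of r] by simp
qed

lemma helper4:
  fixes x s p \<beta> :: real assumes "x > 0" "s > 0"
  shows "x powr p * exp (2 * \<beta> / x powr s) = exp (-(p/s) * ln (x powr (-s)) + 2*\<beta>*(x powr (-s)))"
proof -
  have "x powr p = exp (p * ln x)" using assms by (simp add: powr_def)
  also have "p * ln x = -(p/s) * ln (x powr (-s))" using assms by (simp add: ln_powr)
  finally have 1: "x powr p = exp (-(p/s) * ln (x powr (-s)))" .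
  have "2 * \<beta> / x powr s = 2*\<beta>*(1 / x powr s)" by simp
  hence "2 * \<beta> / x powr s = 2*\<beta>*(x powr (-s))" using powr_rel(2)[OF assms] by simp
  thus ?thesis using 1 by (simp add: exp_add)
qed

theorem lemma8:
  fixes r s \<alpha> \<beta> b C :: real
    and hs h e :: "nat \<Rightarrow> real"
  assumes rs: "0 < r" "r < s"
    and ab: "\<alpha> > 0" "\<beta> > 0"
    and hs_def: "\<forall>n\<ge>3. hs n > 0 \<and>
        2 * \<alpha> / hs n powr r + 2 * \<beta> / hs n powr s = ln (real n) - (ln (ln (real n)))^2"
    and h_pos: "\<forall>n. h n > 0"
    and h_lim: "h \<longlonglongrightarrow> 0"
    and e_lim: "e \<longlonglongrightarrow> 0"
    and h_eq: "\<forall>\<^sub>F n in sequentially.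
        b * ln (h n) + 2 * \<alpha> / h n powr r + 2 * \<beta> / h n powr s
          = ln (real n) + C * (1 + e n)"
  shows "(hs \<sim>[sequentially] (\<lambda>n. (ln (real n) / (2 * \<beta>)) powr (- 1 / s))) \<and>
    (\<forall>a::real. (\<lambda>n. h n powr a * exp (- 2 * \<alpha> / h n powr r))
           \<sim>[sequentially] (\<lambda>n. hs n powr a * exp (- 2 * \<alpha> / hs n powr r))) \<and>
    (\<forall>a::real. (\<lambda>n. hs n powr a / real n * exp (2 * \<beta> / hs n powr s))
           \<in> o(\<lambda>n. exp (- 2 * \<alpha> / hs n powr r))) \<and>
    (\<forall>\<gamma>::real. \<forall>\<^sub>F n in sequentially.
           hs n powr (s + 2 * \<gamma> - 1) * exp (2 * \<beta> / hs n powr s)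
             \<le> h n powr (s + 2 * \<gamma> - 1) * exp (2 * \<beta> / h n powr s))"
proof -
  define q where "q = r / s"
  define u where "u n = h n powr (-s)" for n
  define v where "v n = hs n powr (-s)" for n
  define L where "L n = ln (real n)" for n
  have s0: "s > 0" using rs by simp
  have q0: "0 < q" "q < 1" using rs by (auto simp: q_def field_simps)
  have ev3: "\<forall>\<^sub>F n in sequentially. n \<ge> 3" by (rule eventually_ge_at_top)
  have hs_pos: "\<forall>\<^sub>F n in sequentially. hs n > 0"
    by (rule eventually_mono[OF ev3]) (use hs_def in auto)
  have u_pos: "u n > 0" for n using h_pos[rule_format, of n] by (simp add: u_def)
  have Epos: "\<forall>\<^sub>F n in sequentially. v n > 0 \<and> hs n > 0" using hs_pos
    by (auto elim!: eventually_mono simp: v_def)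
  have Ev: "\<forall>\<^sub>F n in sequentially. 2*\<alpha> * v n powr q + 2*\<beta> * v n = L n - (ln (L n))^2"
    using ev3 hs_def
  proof (elim eventually_mono)
    fix n :: nat assume "n \<ge> 3"
    with hs_def have hn: "hs n > 0"
      "2 * \<alpha> / hs n powr r + 2 * \<beta> / hs n powr s = ln (real n) - (ln (ln (real n)))^2"
      by auto
    have "2 * \<alpha> / hs n powr r = 2*\<alpha> * (1 / hs n powr r)" by simp
    also have "\<dots> = 2*\<alpha> * v n powr q" using powr_rel(1)[OF hn(1) s0, of r]
      by (simp add: v_def q_def)
    finally have 1: "2 * \<alpha> / hs n powr r = 2*\<alpha> * v n powr q" .
    have "2 * \<beta> / hs n powr s = 2*\<beta> * (1 / hs n powr s)" by simp
    also have "\<dots> = 2*\<beta> * v n" using powr_rel(2)[OF hn(1) s0]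
      by (simp add: v_def)
    finally have 2: "2 * \<beta> / hs n powr s = 2*\<beta> * v n" .
    show "2*\<alpha> * v n powr q + 2*\<beta> * v n = L n - (ln (L n))^2"
      using hn(2) 1 2 by (simp add: L_def)
  qed
  have Eu: "\<forall>\<^sub>F n in sequentially. -(b/s) * ln (u n) + 2*\<alpha> * u n powr q + 2*\<beta> * u n
      = L n + C * (1 + e n)"
    using h_eq
  proof (elim eventually_mono)
    fix n :: nat assume hn2: "b * ln (h n) + 2 * \<alpha> / h n powr r + 2 * \<beta> / h n powr s
          = ln (real n) + C * (1 + e n)"
    have hn: "h n > 0" using h_pos by simp
    have "2 * \<alpha> / h n powr r = 2*\<alpha> * (1 / h n powr r)" by simp
    also have "\<dots> = 2*\<alpha> * u n powr q" using powr_rel(1)[OF hn(1) s0, of r]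
      by (simp add: u_def q_def)
    finally have 1: "2 * \<alpha> / h n powr r = 2*\<alpha> * u n powr q" .
    have "2 * \<beta> / h n powr s = 2*\<beta> * (1 / h n powr s)" by simp
    also have "\<dots> = 2*\<beta> * u n" using powr_rel(2)[OF hn(1) s0]
      by (simp add: u_def)
    finally have 2: "2 * \<beta> / h n powr s = 2*\<beta> * u n" .
    have 3: "b * ln (h n) = -(b/s) * ln (u n)" using powr_rel(3)[OF hn(1) s0] s0
      by (simp add: u_def)
    show "-(b/s) * ln (u n) + 2*\<alpha> * u n powr q + 2*\<beta> * u n = L n + C * (1 + e n)"
      using hn2 1 2 3 by (simp add: L_def)
  qed
  have h_right: "filterlim h (at_right 0) sequentially"
    using h_lim h_pos by (auto intro!: tendsto_imp_filterlim_at_right)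
  have "filterlim (\<lambda>x::real. x powr (-s)) at_top (at_right 0)"
    using s0 by real_asymp
  hence u_top: "filterlim u at_top sequentially"
    unfolding u_def by (rule filterlim_compose[OF _ h_right])
  have L_top: "filterlim L at_top sequentially" unfolding L_def by real_asymp
  have lim1: "((\<lambda>x::real. x powr q / x) \<longlongrightarrow> 0) at_top" using q0 by real_asymp
  have lim2: "((\<lambda>x::real. ln x / x) \<longlongrightarrow> 0) at_top" by real_asymp
  have t1: "((\<lambda>n. u n powr q / u n) \<longlongrightarrow> 0) sequentially"
    using filterlim_compose[OF lim1 u_top] .
  have t2: "((\<lambda>n. ln (u n) / u n) \<longlongrightarrow> 0) sequentially"
    using filterlim_compose[OF lim2 u_top] .
  have t3: "((\<lambda>n. C * (1 + e n) / u n) \<longlongrightarrow> 0) sequentially"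
    by (rule tendsto_divide_0[OF tendsto_mult[OF tendsto_const tendsto_add[OF tendsto_const e_lim]]
        filterlim_at_top_imp_at_infinity[OF u_top]])
  have "((\<lambda>n. 2*\<beta> + 2*\<alpha> * (u n powr q / u n) - (b/s) * (ln (u n) / u n) - C * (1 + e n) / u n)
     \<longlongrightarrow> 2*\<beta> + 2*\<alpha>*0 - (b/s)*0 - 0) sequentially"
    by (intro tendsto_intros t1 t2 t3)
  hence "((\<lambda>n. 2*\<beta> + 2*\<alpha> * (u n powr q / u n) - (b/s) * (ln (u n) / u n) - C * (1 + e n) / u n)
     \<longlongrightarrow> 2*\<beta>) sequentially" by simp
  hence Lu: "((\<lambda>n. L n / u n) \<longlongrightarrow> 2*\<beta>) sequentially"
  proof (rule Lim_transform_eventually)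
    show "\<forall>\<^sub>F n in sequentially. 2*\<beta> + 2*\<alpha> * (u n powr q / u n) - (b/s) * (ln (u n) / u n)
       - C * (1 + e n) / u n = L n / u n"
      using Eu
    proof (elim eventually_mono)
      fix n :: nat assume "-(b/s) * ln (u n) + 2*\<alpha> * u n powr q + 2*\<beta> * u n = L n + C * (1 + e n)"
      hence "L n = -(b/s) * ln (u n) + 2*\<alpha> * u n powr q + 2*\<beta> * u n - C * (1 + e n)" by simp
      hence "L n / u n = (-(b/s) * ln (u n) + 2*\<alpha> * u n powr q + 2*\<beta> * u n - C * (1 + e n)) / u n"
        by simp
      also have "\<dots> = -(b/s) * (ln (u n) / u n) + 2*\<alpha> * (u n powr q / u n) + 2*\<beta> * (u n / u n)
         - C * (1 + e n) / u n" by (simp add: diff_divide_distrib add_divide_distrib)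
      finally show "2*\<beta> + 2*\<alpha> * (u n powr q / u n) - (b/s) * (ln (u n) / u n)
       - C * (1 + e n) / u n = L n / u n" using u_pos[of n] by simp
    qed
  qed
  have uL: "((\<lambda>n. u n / L n) \<longlongrightarrow> 1/(2*\<beta>)) sequentially"
  proof -
    have "((\<lambda>n. inverse (L n / u n)) \<longlongrightarrow> inverse (2*\<beta>)) sequentially"
      using ab by (intro tendsto_intros Lu) simp
    thus ?thesis by (simp add: field_simps)
  qed
  have Lpos: "\<forall>\<^sub>F n in sequentially. L n > 0" using L_top by (simp add: filterlim_at_top_dense)
  have vle: "\<forall>\<^sub>F n in sequentially. v n \<le> L n / (2*\<beta>)"
    using Ev Epos
  proof eventually_elim
    case (elim n)
    have "2*\<alpha> * v n powr q \<ge> 0" using ab by simp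
    hence "2*\<beta> * v n \<le> L n" using elim(1) by (smt (verit) zero_le_power2)
    thus ?case using ab by (simp add: field_simps)
  qed
  have vqL: "((\<lambda>n. v n powr q / L n) \<longlongrightarrow> 0) sequentially"
  proof (rule tendsto_sandwich)
    show "\<forall>\<^sub>F n in sequentially. 0 \<le> v n powr q / L n" using Lpos
      by (auto elim: eventually_mono)
    show "\<forall>\<^sub>F n in sequentially. v n powr q / L n \<le> (L n / (2*\<beta>)) powr q / L n"
      using vle Lpos Epos
    proof eventually_elim
      case (elim n)
      thus ?case using q0 by (auto intro!: divide_right_mono powr_mono2)
    qed
    show "((\<lambda>n. (L n / (2*\<beta>)) powr q / L n) \<longlongrightarrow> 0) sequentially"
      unfolding L_def using q0 ab by real_asymp
  qed simp
  have lnLL: "((\<lambda>n. (ln (L n))^2 / L n) \<longlongrightarrow> 0) sequentially"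
    unfolding L_def by real_asymp
  have "((\<lambda>n. (1 - (ln (L n))^2 / L n - 2*\<alpha> * (v n powr q / L n)) / (2*\<beta>))
      \<longlongrightarrow> (1 - 0 - 2*\<alpha>*0) / (2*\<beta>)) sequentially"
    by (intro tendsto_intros vqL lnLL) (use ab in simp)
  hence "((\<lambda>n. (1 - (ln (L n))^2 / L n - 2*\<alpha> * (v n powr q / L n)) / (2*\<beta>))
      \<longlongrightarrow> 1 / (2*\<beta>)) sequentially" by simp
  hence vL: "((\<lambda>n. v n / L n) \<longlongrightarrow> 1/(2*\<beta>)) sequentially"
  proof (rule Lim_transform_eventually)
    show "\<forall>\<^sub>F n in sequentially. (1 - (ln (L n))^2 / L n - 2*\<alpha> * (v n powr q / L n)) / (2*\<beta>)
       = v n / L n"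
      using Ev Lpos
    proof eventually_elim
      case (elim n)
      have "1 - (ln (L n))^2 / L n - 2*\<alpha> * (v n powr q / L n)
         = (L n - (ln (L n))^2 - 2*\<alpha> * v n powr q) / L n"
        using elim(2) by (simp add: diff_divide_distrib)
      also have "\<dots> = 2*\<beta> * v n / L n" using elim(1) by (smt (verit))
      finally show ?case using ab by simp
    qed
  qed
  have uv: "((\<lambda>n. u n / v n) \<longlongrightarrow> 1) sequentially"
  proof -
    have "((\<lambda>n. (u n / L n) / (v n / L n)) \<longlongrightarrow> (1/(2*\<beta>)) / (1/(2*\<beta>))) sequentially"
      using ab by (intro tendsto_intros uL vL) simp
    hence "((\<lambda>n. (u n / L n) / (v n / L n)) \<longlongrightarrow> 1) sequentially" using ab by simp
    thus ?thesis
    proof (rule Lim_transform_eventually)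
      show "\<forall>\<^sub>F n in sequentially. (u n / L n) / (v n / L n) = u n / v n"
        using Lpos by (auto elim: eventually_mono)
    qed
  qed
  have ev_uL1: "\<forall>\<^sub>F n in sequentially. u n / L n > 1/(4*\<beta>)"
    using order_tendstoD(1)[OF uL, of "1/(4*\<beta>)"] ab by (simp add: field_simps)
  have ev_uL2: "\<forall>\<^sub>F n in sequentially. u n / L n < 1/\<beta>"
    using order_tendstoD(2)[OF uL, of "1/\<beta>"] ab by (simp add: field_simps)
  have ev_vL1: "\<forall>\<^sub>F n in sequentially. v n / L n > 1/(4*\<beta>)"
    using order_tendstoD(1)[OF vL, of "1/(4*\<beta>)"] ab by (simp add: field_simps)
  have ev_L4: "\<forall>\<^sub>F n in sequentially. L n \<ge> 4*\<beta>"
    using L_top by (simp add: filterlim_at_top)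
  have ev_e: "\<forall>\<^sub>F n in sequentially. \<bar>e n\<bar> \<le> 1"
  proof -
    have "\<forall>\<^sub>F n in sequentially. dist (e n) 0 < 1" using e_lim by (rule tendstoD) simp
    thus ?thesis by (auto elim: eventually_mono)
  qed
  define R where "R n = (ln (L n))^2 + C * (1 + e n) + (b/s) * ln (u n)" for n
  define W where "W n = u n powr q - v n powr q" for n
  define B where "B n = (ln (L n))^2 + 2*\<bar>C\<bar> + \<bar>b/s\<bar> * ln (L n / \<beta>)" for n
  define Bl where "Bl n = (ln (L n))^2 - 2*\<bar>C\<bar> - \<bar>b/s\<bar> * ln (L n / \<beta>)" for n
  have keyeq: "\<forall>\<^sub>F n in sequentially. 2*\<beta>*(u n - v n) + 2*\<alpha> * W n = R n"
    using Eu Ev by eventually_elim (simp add: R_def W_def algebra_simps)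
  have bounds: "\<forall>\<^sub>F n in sequentially. L n / (4*\<beta>) \<le> u n \<and> u n \<le> L n / \<beta> \<and>
      L n / (4*\<beta>) \<le> v n \<and> 1 \<le> u n \<and> v n > 0 \<and> L n > 0 \<and> \<bar>e n\<bar> \<le> 1"
    using ev_uL1 ev_uL2 ev_vL1 ev_L4 Lpos Epos ev_e
  proof eventually_elim
    case (elim n)
    have a1: "L n / (4*\<beta>) \<le> u n" using elim ab by (simp add: field_simps)
    have a2: "u n \<le> L n / \<beta>" using elim ab by (simp add: field_simps)
    have a3: "L n / (4*\<beta>) \<le> v n" using elim ab by (simp add: field_simps)
    have "1 \<le> L n / (4*\<beta>)" using elim(4) ab by (simp add: field_simps)
    thus ?case using a1 a2 a3 elim by auto
  qed
  have Rbound: "\<forall>\<^sub>F n in sequentially. \<bar>R n\<bar> \<le> B n \<and> Bl n \<le> R n"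
    using bounds
  proof eventually_elim
    case (elim n)
    have l1: "0 \<le> ln (u n)" using elim by simp
    have l2: "ln (u n) \<le> ln (L n / \<beta>)" using elim ab by (subst ln_le_cancel_iff) auto
    have c1: "\<bar>C * (1 + e n)\<bar> \<le> 2*\<bar>C\<bar>"
    proof -
      have "\<bar>1 + e n\<bar> \<le> 2" using elim by linarith
      hence "\<bar>C\<bar> * \<bar>1 + e n\<bar> \<le> \<bar>C\<bar> * 2" by (intro mult_left_mono) auto
      thus ?thesis by (simp add: abs_mult)
    qed
    have c2: "\<bar>(b/s) * ln (u n)\<bar> \<le> \<bar>b/s\<bar> * ln (L n / \<beta>)"
      using l1 l2 by (simp only: abs_mult) (intro mult_left_mono, auto)
    have "0 \<le> (ln (L n))^2" by simp
    thus ?case using c1 c2 unfolding R_def B_def Bl_def abs_le_iff by linarith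
  qed
  have Dbound: "\<forall>\<^sub>F n in sequentially. 2*\<beta> * \<bar>u n - v n\<bar> \<le> \<bar>R n\<bar>"
    using keyeq bounds
  proof eventually_elim
    case (elim n)
    show ?case
    proof (cases "v n \<le> u n")
      case True
      hence "v n powr q \<le> u n powr q" using elim q0 by (intro powr_mono2) auto
      hence "2*\<alpha>*W n \<ge> 0" using ab by (simp add: W_def)
      moreover have "2*\<beta>*(u n - v n) \<ge> 0" using True ab by simp
      ultimately show ?thesis using elim(1) True by (simp add: abs_if)
    next
      case False
      hence "u n powr q \<le> v n powr q" using elim q0 by (intro powr_mono2) auto
      hence "2*\<alpha>*W n \<le> 0" using ab by (simp add: W_def mult_nonneg_nonpos)
      moreover have "2*\<beta>*(u n - v n) \<le> 0" using False ab by (simp add: mult_nonneg_nonpos)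
      ultimately show ?thesis using elim(1) False by (auto simp: abs_if algebra_simps)
    qed
  qed
  have Wbound: "\<forall>\<^sub>F n in sequentially. norm (W n) \<le> q / (2*\<beta>) * ((L n / (4*\<beta>)) powr (q - 1) * B n)"
    using Dbound bounds Rbound
  proof eventually_elim
    case (elim n)
    have m: "L n / (4*\<beta>) \<le> min (u n) (v n)" using elim by auto
    have "norm (W n) \<le> q * min (u n) (v n) powr (q - 1) * \<bar>u n - v n\<bar>"
      unfolding W_def real_norm_def using elim q0 by (intro powr_abs_diff_bound) auto
    also have "\<dots> \<le> q * (L n / (4*\<beta>)) powr (q - 1) * (B n / (2*\<beta>))"
    proof (rule mult_mono)
      show "q * min (u n) (v n) powr (q - 1) \<le> q * (L n / (4 * \<beta>)) powr (q - 1)"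
        using m q0 elim ab by (intro mult_left_mono powr_mono2') auto
      show "\<bar>u n - v n\<bar> \<le> B n / (2 * \<beta>)" using elim ab by (simp add: field_simps)
    qed (use q0 in auto)
    finally show ?case by (simp add: field_simps)
  qed
  have W0: "(W \<longlonglongrightarrow> 0)"
  proof (rule Lim_null_comparison[OF Wbound])
    have "((\<lambda>n. (L n / (4*\<beta>)) powr (q - 1) * B n) \<longlongrightarrow> 0) sequentially"
      unfolding L_def B_def using ab q0 by real_asymp
    thus "((\<lambda>n. q / (2*\<beta>) * ((L n / (4*\<beta>)) powr (q - 1) * B n)) \<longlongrightarrow> 0) sequentially"
      by (intro tendsto_mult_right_zero)
  qed
  have D_top: "filterlim (\<lambda>n. u n - v n) at_top sequentially"
  proof (rule filterlim_at_top_mono)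
    show "filterlim (\<lambda>n. (Bl n - 2*\<alpha>) / (2*\<beta>)) at_top sequentially"
      unfolding Bl_def L_def using ab by real_asymp
    have "\<forall>\<^sub>F n in sequentially. dist (W n) 0 < 1" using W0 by (rule tendstoD) simp
    thus "\<forall>\<^sub>F n in sequentially. (Bl n - 2*\<alpha>) / (2*\<beta>) \<le> u n - v n"
      using keyeq Rbound
    proof eventually_elim
      case (elim n)
      have "Bl n - 2*\<alpha> \<le> 2*\<beta>*(u n - v n)"
      proof -
        have "\<bar>W n\<bar> < 1" using elim by simp
        hence "W n < 1" by simp
        hence "2*\<alpha> * W n < 2*\<alpha> * 1" using ab by (intro mult_strict_left_mono) auto
        thus ?thesis using elim by linarith
      qed
      thus ?case using ab by (simp add: field_simps)
    qed
  qed
  have lnuv: "((\<lambda>n. ln (u n) - ln (v n)) \<longlongrightarrow> 0) sequentially"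
  proof -
    have "((\<lambda>n. ln (u n / v n)) \<longlongrightarrow> ln 1) sequentially"
      by (intro tendsto_intros uv) simp
    hence "((\<lambda>n. ln (u n / v n)) \<longlongrightarrow> 0) sequentially" by simp
    thus ?thesis
    proof (rule Lim_transform_eventually)
      show "\<forall>\<^sub>F n in sequentially. ln (u n / v n) = ln (u n) - ln (v n)"
        using Epos
      proof eventually_elim
        case (elim n)
        thus ?case using u_pos[of n] by (simp add: ln_div)
      qed
    qed
  qed
  have P1: "hs \<sim>[sequentially] (\<lambda>n. (ln (real n) / (2 * \<beta>)) powr (- 1 / s))"
  proof (rule asymp_equivI')
    have "((\<lambda>n. (v n / L n) * (2*\<beta>)) \<longlongrightarrow> 1/(2*\<beta>) * (2*\<beta>)) sequentially"
      by (intro tendsto_intros vL)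
    hence "((\<lambda>n. (v n / L n) * (2*\<beta>)) \<longlongrightarrow> 1) sequentially" using ab by simp
    hence "((\<lambda>n. ((v n / L n) * (2*\<beta>)) powr (-1/s)) \<longlongrightarrow> 1 powr (-1/s)) sequentially"
      by (intro tendsto_intros) auto
    hence "((\<lambda>n. ((v n / L n) * (2*\<beta>)) powr (-1/s)) \<longlongrightarrow> 1) sequentially" by simp
    thus "((\<lambda>n. hs n / (ln (real n) / (2 * \<beta>)) powr (- 1 / s)) \<longlongrightarrow> 1) sequentially"
    proof (rule Lim_transform_eventually)
      show "\<forall>\<^sub>F n in sequentially. ((v n / L n) * (2*\<beta>)) powr (-1/s) =
          hs n / (ln (real n) / (2 * \<beta>)) powr (- 1 / s)"
        using Epos Lpos
      proof eventually_elim
        case (elim n)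
        have "hs n = v n powr (-1/s)" using powr_rel(4)[of "hs n" s] elim s0 by (simp add: v_def)
        moreover have "(v n / L n) * (2*\<beta>) = v n / (L n / (2*\<beta>))" by simp
        ultimately show ?case using elim ab by (simp add: powr_divide powr_mult L_def)
      qed
    qed
  qed
  have P2: "(\<lambda>n. h n powr a * exp (- 2 * \<alpha> / h n powr r))
           \<sim>[sequentially] (\<lambda>n. hs n powr a * exp (- 2 * \<alpha> / hs n powr r))" for a
  proof (rule asymp_equivI')
    have "((\<lambda>n. (u n / v n) powr (-a/s) * exp (-(2*\<alpha>) * W n)) \<longlongrightarrow> 1 powr (-a/s) * exp (-(2*\<alpha>) * 0)) sequentially"
      by (intro tendsto_intros uv W0) auto
    hence "((\<lambda>n. (u n / v n) powr (-a/s) * exp (-(2*\<alpha>) * W n)) \<longlongrightarrow> 1) sequentially" by simp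
    thus "((\<lambda>n. h n powr a * exp (- 2 * \<alpha> / h n powr r) / (hs n powr a * exp (- 2 * \<alpha> / hs n powr r))) \<longlongrightarrow> 1) sequentially"
    proof (rule Lim_transform_eventually)
      show "\<forall>\<^sub>F n in sequentially. (u n / v n) powr (-a/s) * exp (-(2*\<alpha>) * W n) =
         h n powr a * exp (- 2 * \<alpha> / h n powr r) / (hs n powr a * exp (- 2 * \<alpha> / hs n powr r))"
        using Epos
      proof eventually_elim
        case (elim n)
        have hp: "h n > 0" using h_pos by simp
        have "h n powr a * exp (- 2 * \<alpha> / h n powr r) / (hs n powr a * exp (- 2 * \<alpha> / hs n powr r))
          = (u n powr (-a/s) * exp (-(2*\<alpha>) * u n powr q)) / (v n powr (-a/s) * exp (-(2*\<alpha>) * v n powr q))"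
          using helper2[OF hp s0, of a \<alpha> r] helper2[of "hs n" s a \<alpha> r] elim s0
          by (simp add: u_def v_def q_def)
        also have "\<dots> = (u n / v n) powr (-a/s) * (exp (-(2*\<alpha>) * u n powr q) / exp (-(2*\<alpha>) * v n powr q))"
          using elim u_pos[of n] by (simp add: powr_divide)
        also have "exp (-(2*\<alpha>) * u n powr q) / exp (-(2*\<alpha>) * v n powr q) = exp (-(2*\<alpha>) * W n)"
          by (simp add: W_def exp_diff[symmetric] algebra_simps)
        finally show ?case by simp
      qed
    qed
  qed
  have P3: "(\<lambda>n. hs n powr a / real n * exp (2 * \<beta> / hs n powr s))
           \<in> o(\<lambda>n. exp (- 2 * \<alpha> / hs n powr r))" for a
  proof (rule smalloI_tendsto)
    show "\<forall>\<^sub>F n in sequentially. exp (- 2 * \<alpha> / hs n powr r) \<noteq> 0" by simp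
    have "((\<lambda>n. ((v n / L n) * (2*\<beta>)) powr (-a/s)) \<longlongrightarrow> 1) sequentially"
    proof -
      have "((\<lambda>n. (v n / L n) * (2*\<beta>)) \<longlongrightarrow> 1/(2*\<beta>) * (2*\<beta>)) sequentially"
        by (intro tendsto_intros vL)
      hence "((\<lambda>n. (v n / L n) * (2*\<beta>)) \<longlongrightarrow> 1) sequentially" using ab by simp
      hence "((\<lambda>n. ((v n / L n) * (2*\<beta>)) powr (-a/s)) \<longlongrightarrow> 1 powr (-a/s)) sequentially"
        by (intro tendsto_intros) auto
      thus ?thesis by simp
    qed
    moreover have "((\<lambda>n. (L n / (2*\<beta>)) powr (-a/s) * exp (- ((ln (L n))^2))) \<longlongrightarrow> 0) sequentially"
      unfolding L_def using ab by real_asymp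
    ultimately have "((\<lambda>n. ((v n / L n) * (2*\<beta>)) powr (-a/s) * ((L n / (2*\<beta>)) powr (-a/s) * exp (- ((ln (L n))^2)))) \<longlongrightarrow> 1 * 0) sequentially"
      by (rule tendsto_mult)
    hence "((\<lambda>n. ((v n / L n) * (2*\<beta>)) powr (-a/s) * ((L n / (2*\<beta>)) powr (-a/s) * exp (- ((ln (L n))^2)))) \<longlongrightarrow> 0) sequentially"
      by simp
    thus "((\<lambda>n. hs n powr a / real n * exp (2 * \<beta> / hs n powr s) / exp (- 2 * \<alpha> / hs n powr r)) \<longlongrightarrow> 0) sequentially"
    proof (rule Lim_transform_eventually)
      show "\<forall>\<^sub>F n in sequentially. ((v n / L n) * (2*\<beta>)) powr (-a/s) * ((L n / (2*\<beta>)) powr (-a/s) * exp (- ((ln (L n))^2)))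
        = hs n powr a / real n * exp (2 * \<beta> / hs n powr s) / exp (- 2 * \<alpha> / hs n powr r)"
        using Epos Lpos Ev
      proof eventually_elim
        case (elim n)
        have hp: "hs n > 0" using elim by simp
        have np: "real n > 0" using elim by (auto simp: L_def intro: ccontr)
        have "((v n / L n) * (2*\<beta>)) powr (-a/s) * (L n / (2*\<beta>)) powr (-a/s) = v n powr (-a/s)"
          using elim ab by (simp add: powr_mult[symmetric])
        also have "v n powr (-a/s) = hs n powr a" using hp s0 by (simp add: v_def powr_powr)
        finally have 1: "((v n / L n) * (2*\<beta>)) powr (-a/s) * (L n / (2*\<beta>)) powr (-a/s) = hs n powr a" .
        have 2: "2 * \<beta> / hs n powr s = 2*\<beta>* v n" unfolding v_def powr_rel(2)[OF hp s0, symmetric] by simp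
        have 3: "- 2 * \<alpha> / hs n powr r = -(2*\<alpha>* v n powr q)"
          unfolding v_def q_def powr_rel(1)[OF hp s0, of r, symmetric] by simp
        have "exp (2*\<beta>* v n) / exp (-(2*\<alpha>* v n powr q)) = exp (L n - (ln (L n))^2)"
          using elim(3) by (simp add: exp_diff[symmetric])
        also have "\<dots> = real n * exp (- ((ln (L n))^2))"
          using np by (simp add: exp_diff L_def field_simps exp_minus)
        finally have 4: "exp (2*\<beta>* v n) / exp (-(2*\<alpha>* v n powr q)) = real n * exp (- ((ln (L n))^2))" .
        have "hs n powr a / real n * exp (2 * \<beta> / hs n powr s) / exp (- 2 * \<alpha> / hs n powr r)
           = hs n powr a / real n * (exp (2*\<beta>* v n) / exp (-(2*\<alpha>* v n powr q)))"
          unfolding 2 3 by simp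
        also have "\<dots> = hs n powr a * exp (- ((ln (L n))^2))" unfolding 4 using np by simp
        finally show ?case using 1 by (simp add: mult.assoc[symmetric])
      qed
    qed
  qed
  have P4: "\<forall>\<^sub>F n in sequentially.
           hs n powr (s + 2 * \<gamma> - 1) * exp (2 * \<beta> / hs n powr s)
             \<le> h n powr (s + 2 * \<gamma> - 1) * exp (2 * \<beta> / h n powr s)" for \<gamma>
  proof -
    define p where "p = s + 2 * \<gamma> - 1"
    have "((\<lambda>n. (p/s) * (ln (u n) - ln (v n))) \<longlongrightarrow> (p/s) * 0) sequentially"
      by (intro tendsto_intros lnuv)
    hence "\<forall>\<^sub>F n in sequentially. (p/s) * (ln (u n) - ln (v n)) < 1"
      by (intro order_tendstoD(2)) auto
    moreover have "\<forall>\<^sub>F n in sequentially. u n - v n \<ge> 1/(2*\<beta>)"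
      using D_top by (simp add: filterlim_at_top)
    ultimately show ?thesis using Epos
    proof eventually_elim
      case (elim n)
      have hp: "h n > 0" using h_pos by simp
      have "2*\<beta>*(u n - v n) \<ge> 1" using elim(2) ab by (simp add: field_simps)
      hence "-(p/s) * ln (v n) + 2*\<beta>* v n \<le> -(p/s) * ln (u n) + 2*\<beta>*u n"
        using elim(1) by (simp add: algebra_simps)
      thus ?case unfolding p_def[symmetric]
        using helper4[OF hp s0, of p \<beta>] helper4[of "hs n" s p \<beta>] elim s0
        by (simp add: u_def v_def)
    qed
  qed
  show ?thesis using P1 P2 P3 P4 by blast
qed

end
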